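(* Let $\sigma$ be the substitution on $\{0,1\}$ given by $\sigma(0)=01$, $\sigma(1)=00$, let $X_\sigma\subset\{0,1\}^{\mathbb Z}$ be its subshift with shift map $S$, and let $T(x,z)=(Sx,z+1)$ on $X_\sigma\times\mathbb Z_3$. Then the minimal Cantor system $(X_\sigma\times\mathbb Z_3,T)$ is self-induced.
   Context: $X_\sigma$ is the set of bi-infinite sequences over $\{0,1\}$ all of whose finite subwords are subwords of $\sigma^k(a)$ for some letter $a$ and $k\ge1$; $S(x)_i=x_{i+1}$; $\mathbb Z_3$ is the $3$-adic integers. The system $(X_\sigma\times\mathbb Z_3,T)$ is a minimal Cantor system (a fact established separately in the paper). A minimal Cantor system $(X,T)$ is self-induced if there is a nonempty clopen proper $U\subsetneq X$ such that $(U,T_U)$, $T_U(x)=T^{r_U(x)}x$ with $r_U(x)=\inf\{n>0:T^nx\in U\}$, is topologically conjugate to $(X,T)$. *)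

theory Defs
  imports "HOL-Analysis.Analysis"
begin

definition return_time :: "('a \<Rightarrow> 'a) \<Rightarrow> 'a set \<Rightarrow> 'a \<Rightarrow> nat" where
  "return_time T U x = (LEAST n. n > 0 \<and> (T ^^ n) x \<in> U)"

definition induced_map :: "('a \<Rightarrow> 'a) \<Rightarrow> 'a set \<Rightarrow> 'a \<Rightarrow> 'a" where
  "induced_map T U x = (T ^^ return_time T U x) x"

definition top_conjugate ::
  "'a topology \<Rightarrow> ('a \<Rightarrow> 'a) \<Rightarrow> 'b topology \<Rightarrow> ('b \<Rightarrow> 'b) \<Rightarrow> bool" where
  "top_conjugate X T Y R \<longleftrightarrow>
     (\<exists>h. homeomorphic_map X Y h \<and> (\<forall>x\<in>topspace X. h (T x) = R (h x)))"

definition self_induced :: "'a topology \<Rightarrow> ('a \<Rightarrow> 'a) \<Rightarrow> bool" where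
  "self_induced X T \<longleftrightarrow>
     (\<exists>U. U \<noteq> {} \<and> U \<subset> topspace X \<and> openin X U \<and> closedin X U \<and>
          top_conjugate X T (subtopology X U) (induced_map T U))"

fun sigma :: "nat \<Rightarrow> nat list" where
  "sigma a = (if a = 0 then [0, 1] else [0, 0])"

definition sigma_word :: "nat list \<Rightarrow> nat list" where
  "sigma_word w = concat (map sigma w)"

definition sigma_language :: "nat list set" where
  "sigma_language = {w. \<exists>a\<in>{0,1}. \<exists>k\<ge>1. \<exists>u v. (sigma_word ^^ k) [a] = u @ w @ v}"

definition X_sigma :: "(int \<Rightarrow> nat) set" where
  "X_sigma = {x. (\<forall>i. x i \<in> {0,1}) \<and>
     (\<forall>i (n::nat). map (\<lambda>j. x (i + int j)) [0..<n] \<in> sigma_language)}"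

definition X_sigma_top :: "(int \<Rightarrow> nat) topology" where
  "X_sigma_top = subtopology (product_topology (\<lambda>_::int. discrete_topology {0::nat,1}) UNIV) X_sigma"

definition shift :: "(int \<Rightarrow> nat) \<Rightarrow> (int \<Rightarrow> nat)" where
  "shift x = (\<lambda>i. x (i + 1))"

section \<open>3-adic integers as the inverse limit of Z/3^n Z\<close>

definition Z3 :: "(nat \<Rightarrow> nat) set" where
  "Z3 = {a. \<forall>n. a n < 3 ^ n \<and> a n = a (Suc n) mod 3 ^ n}"

definition Z3_top :: "(nat \<Rightarrow> nat) topology" where
  "Z3_top = subtopology (product_topology (\<lambda>n. discrete_topology {..<(3::nat) ^ n}) UNIV) Z3"

definition Z3_plus1 :: "(nat \<Rightarrow> nat) \<Rightarrow> (nat \<Rightarrow> nat)" where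
  "Z3_plus1 a = (\<lambda>n. (a n + 1) mod 3 ^ n)"

definition T_map :: "(int \<Rightarrow> nat) \<times> (nat \<Rightarrow> nat) \<Rightarrow> (int \<Rightarrow> nat) \<times> (nat \<Rightarrow> nat)" where
  "T_map p = (shift (fst p), Z3_plus1 (snd p))"

end

theory Submission
  imports Defs
begin


abbreviation W :: "nat \<Rightarrow> nat \<Rightarrow> nat list" where "W k a \<equiv> (sigma_word ^^ k) [a]"

lemma sw_append[simp]: "sigma_word (u @ v) = sigma_word u @ sigma_word v"
  by (simp add: sigma_word_def)

lemma sw_Nil[simp]: "sigma_word [] = []" by (simp add: sigma_word_def)

lemma sw_Cons: "sigma_word (a # w) = sigma a @ sigma_word w"
  by (simp add: sigma_word_def)

lemma length_sw[simp]: "length (sigma_word w) = 2 * length w"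
  by (induction w) (auto simp: sw_Cons)

lemma nth_sw: "i < 2 * length w \<Longrightarrow>
  sigma_word w ! i = (if even i then 0 else if w ! (i div 2) = 0 then 1 else 0)"
proof (induction w arbitrary: i)
  case Nil then show ?case by simp
next
  case (Cons a w)
  show ?case
  proof (cases "i < 2")
    case True
    then have "i = 0 \<or> i = 1" by auto
    then show ?thesis by (auto simp: sw_Cons)
  next
    case False
    then have "sigma_word (a # w) ! i = sigma_word w ! (i - 2)"
      by (simp add: sw_Cons nth_append numeral_2_eq_2)
    also have "\<dots> = (if even (i-2) then 0 else if w ! ((i-2) div 2) = 0 then 1 else 0)"
      using Cons False by auto
    also have "\<dots> = (if even i then 0 else if (a#w) ! (i div 2) = 0 then 1 else 0)"
    proof -
      have "(i-2) div 2 = i div 2 - 1" "i div 2 \<noteq> 0" using False by auto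
      moreover have "even (i-2) = even i" using False by auto
      ultimately show ?thesis by (simp add: nth_Cons')
    qed
    finally show ?thesis .
  qed
qed

lemma W_Suc: "W (Suc k) a = sigma_word (W k a)" by simp

lemma length_W[simp]: "length (W k a) = 2 ^ k"
  by (induction k) auto

lemma W_letters: "a \<in> {0,1} \<Longrightarrow> j < 2 ^ k \<Longrightarrow> W k a ! j \<in> {0,1}"
proof (induction k arbitrary: j)
  case 0 then show ?case by simp
next
  case (Suc k) then show ?case by (simp only: W_Suc, subst nth_sw) auto
qed

lemma W_even_zero: "k \<ge> 1 \<Longrightarrow> j < 2 ^ k \<Longrightarrow> even j \<Longrightarrow> W k a ! j = 0"
proof -
  assume "k \<ge> 1" "j < 2^k" "even j"
  then obtain m where k: "k = Suc m" by (cases k) auto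
  show ?thesis using \<open>j < 2^k\<close> \<open>even j\<close> unfolding k W_Suc by (subst nth_sw) auto
qed

lemma W_no11: assumes "Suc j < 2 ^ k" shows "W k a ! j = 0 \<or> W k a ! Suc j = 0"
proof (cases k)
  case 0 then show ?thesis using assms by simp
next
  case (Suc m)
  then show ?thesis using assms W_even_zero[of k j a] W_even_zero[of k "Suc j" a] Suc by (cases "even j") auto
qed

lemma W_comp_append: "(sigma_word ^^ k) (u @ v) = (sigma_word ^^ k) u @ (sigma_word ^^ k) v"
  by (induction k) auto

lemma W_Suc_right: "W (Suc k) a = W k 0 @ W k (if a = 0 then 1 else 0)"
proof -
  have "W (Suc k) a = (sigma_word ^^ k) (sigma_word [a])" by (simp add: funpow_Suc_right del: funpow.simps)
  also have "sigma_word [a] = [0] @ [if a = 0 then 1 else 0]" by (simp add: sigma_word_def)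
  finally show ?thesis by (simp only: W_comp_append)
qed

lemma lang_iff: "w \<in> sigma_language \<longleftrightarrow>
  (\<exists>a\<in>{0,1}. \<exists>k\<ge>1. \<exists>p. p + length w \<le> 2 ^ k \<and> (\<forall>j<length w. W k a ! (p + j) = w ! j))"
proof
  assume "w \<in> sigma_language"
  then obtain a k u v where a: "a \<in> {0,1}" "k \<ge> 1" and e: "W k a = u @ w @ v"
    unfolding sigma_language_def by blast
  have "length u + length w \<le> 2 ^ k" using arg_cong[OF e, of length] by simp
  moreover have "\<forall>j<length w. W k a ! (length u + j) = w ! j" using e by (simp add: nth_append)
  ultimately show "\<exists>a\<in>{0,1}. \<exists>k\<ge>1. \<exists>p. p + length w \<le> 2 ^ k \<and> (\<forall>j<length w. W k a ! (p + j) = w ! j)"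
    using a by blast
next
  assume "\<exists>a\<in>{0,1}. \<exists>k\<ge>1. \<exists>p. p + length w \<le> 2 ^ k \<and> (\<forall>j<length w. W k a ! (p + j) = w ! j)"
  then obtain a k p where a: "a \<in> {0,1}" "k \<ge> 1" and p: "p + length w \<le> 2 ^ k"
    and e: "\<forall>j<length w. W k a ! (p + j) = w ! j" by blast
  have "w = take (length w) (drop p (W k a))"
    by (rule nth_equalityI) (use p e in auto)
  then have "W k a = take p (W k a) @ w @ drop (p + length w) (W k a)"
    by (metis append_take_drop_id drop_drop add.commute)
  then show "w \<in> sigma_language" unfolding sigma_language_def using a by blast
qed

definition win :: "(int \<Rightarrow> nat) \<Rightarrow> int \<Rightarrow> nat \<Rightarrow> nat list" where
  "win x i n = map (\<lambda>j. x (i + int j)) [0..<n]"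

lemma X_sigma_iff: "x \<in> X_sigma \<longleftrightarrow> (\<forall>i. x i \<in> {0,1}) \<and>
  (\<forall>i n. \<exists>a\<in>{0,1}. \<exists>k\<ge>1. \<exists>p. p + n \<le> 2 ^ k \<and> (\<forall>j<n. W k a ! (p + j) = x (i + int j)))"
  unfolding X_sigma_def lang_iff by simp




lemma X_occ: assumes "x \<in> X_sigma"
  obtains a k p where "a \<in> {0,1}" "k \<ge> 1" "p + n \<le> 2 ^ k" "\<And>j. j < n \<Longrightarrow> W k a ! (p + j) = x (i + int j)"
  using assms unfolding X_sigma_iff by meson

lemma X_vals: "x \<in> X_sigma \<Longrightarrow> x i \<in> {0,1}"
  unfolding X_sigma_iff by blast

lemma B1: assumes "x \<in> X_sigma" "x i \<noteq> 0" "x (i + int d) \<noteq> 0" shows "even d"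
proof -
  obtain a k p where a0: "a \<in> {0,1}" and k: "k \<ge> 1" "p + Suc d \<le> 2 ^ k"
    and e: "\<And>j. j < Suc d \<Longrightarrow> W k a ! (p + j) = x (i + int j)"
    using X_occ[OF assms(1), of "Suc d" i] by blast
  have pk: "p < 2 ^ k" "p + d < 2 ^ k" using k(2) by auto
  have n1: "W k a ! p \<noteq> 0" using e[of 0] assms(2) by simp
  have n2: "W k a ! (p + d) \<noteq> 0" using e[of d] assms(3) by simp
  have "odd p"
  proof
    assume "even p" then show False using W_even_zero[of k p a] k(1) pk(1) n1 by simp
  qed
  moreover have "odd (p + d)"
  proof
    assume "even (p + d)" then show False using W_even_zero[of k "p + d" a] k(1) pk(2) n2 by simp
  qed
  ultimately show ?thesis by simp
qed

lemma B1': assumes "x \<in> X_sigma" "x i \<noteq> 0" "x i' \<noteq> 0" shows "even (i' - i)"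
proof (cases "i \<le> i'")
  case True
  define d where "d = nat (i' - i)"
  have dd: "int d = i' - i" using True unfolding d_def by simp
  have "x (i + int d) \<noteq> 0" using assms(3) dd by simp
  then have "even d" using B1[OF assms(1,2)] by blast
  then have "even (int d)" by simp
  then show ?thesis using dd by simp
next
  case False
  define d where "d = nat (i - i')"
  have dd: "int d = i - i'" using False unfolding d_def by simp
  have "x (i' + int d) \<noteq> 0" using assms(2) dd by simp
  then have "even d" using B1[OF assms(1,3)] by blast
  then have "even (int d)" by simp
  then have "even (i - i')" using dd by simp
  then show ?thesis by (metis even_minus minus_diff_eq)
qed

lemma B2: assumes "x \<in> X_sigma" shows "\<exists>j<4. x (i + int j) \<noteq> 0"
proof (rule ccontr)
  assume "\<not> ?thesis"
  then have z: "\<And>j. j < 4 \<Longrightarrow> x (i + int j) = 0" by blast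
  obtain a k p where a0: "a \<in> {0,1}" and k: "k \<ge> 1" "p + 4 \<le> 2 ^ k"
    and e: "\<And>j. j < 4 \<Longrightarrow> W k a ! (p + j) = x (i + int j)"
    using X_occ[OF assms(1), of 4 i] by blast
  obtain m where km: "k = Suc m" using k by (cases k) auto
  define q where "q = (if odd p then p else p + 1)"
  have q: "odd q" "p \<le> q" "q + 2 \<le> p + 3" unfolding q_def by auto
  have "W k a ! q = 0" using e[of "q - p"] z[of "q-p"] q by simp
  moreover have "W k a ! (q+2) = 0" using e[of "q + 2 - p"] z[of "q+2-p"] q by simp
  ultimately have "W m a ! (q div 2) \<noteq> 0" "W m a ! ((q+2) div 2) \<noteq> 0"
    using q k unfolding km W_Suc
    by (subst (asm) nth_sw, simp, simp split: if_splits)+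
  moreover have "(q+2) div 2 = Suc (q div 2)" by simp
  moreover have "Suc (q div 2) < 2 ^ m" using q k km by simp
  ultimately show False using W_no11[of "q div 2" m a] by simp
qed

lemma B3: assumes "x \<in> X_sigma" shows "x i = 0 \<or> x (i + 1) = 0"
  using B1[OF assms, of i 1] by auto

lemma evens_zero: assumes "x \<in> X_sigma" "x 0 = 0" "x 2 = 0" shows "x (2 * i) = 0"
proof (rule ccontr)
  assume h: "x (2 * i) \<noteq> 0"
  obtain j where j: "j < 4" "x (int j) \<noteq> 0" using B2[OF assms(1), of 0] by auto
  then have "j = 1 \<or> j = 3" using assms by (auto simp: less_Suc_eq numeral_eq_Suc)
  moreover have "even (int j - 2 * i)" using B1'[OF assms(1) h j(2)] .
  ultimately show False by auto
qed

lemma shift_X: assumes "x \<in> X_sigma" shows "shift x \<in> X_sigma"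
  unfolding X_sigma_iff
proof (intro conjI allI)
  fix i show "shift x i \<in> {0,1}" using X_vals[OF assms] by (simp add: shift_def)
next
  fix i n
  obtain a k p where "a \<in> {0,1}" "k \<ge> 1" "p + n \<le> 2 ^ k"
     "\<And>j. j < n \<Longrightarrow> W k a ! (p + j) = x (i + 1 + int j)"
    using X_occ[OF assms, of n "i+1"] by blast
  moreover have "\<forall>j<n. W k a ! (p + j) = shift x (i + int j)" using calculation(4)
    by (simp add: shift_def add_ac)
  ultimately show "\<exists>a\<in>{0, 1}. \<exists>k\<ge>1. \<exists>p. p + n \<le> 2 ^ k \<and> (\<forall>j<n. W k a ! (p + j) = shift x (i + int j))"
    by blast
qed

definition sig :: "(int \<Rightarrow> nat) \<Rightarrow> (int \<Rightarrow> nat)" where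
  "sig x = (\<lambda>i. if even i then 0 else if x (i div 2) = 0 then 1 else 0)"

definition desub :: "(int \<Rightarrow> nat) \<Rightarrow> (int \<Rightarrow> nat)" where
  "desub x = (\<lambda>j. if x (2 * j + 1) = 0 then 1 else 0)"

lemma sig_X: assumes "x \<in> X_sigma" shows "sig x \<in> X_sigma"
  unfolding X_sigma_iff
proof (intro conjI allI)
  fix i show "sig x i \<in> {0,1}" by (simp add: sig_def)
next
  fix i :: int and n :: nat
  define m where "m = i div 2"
  define r where "r = nat (i mod 2)"
  have im: "i = 2 * m + int r" unfolding m_def r_def by simp
  obtain a k p where a: "a \<in> {0,1}" "k \<ge> 1" "p + Suc n \<le> 2 ^ k"
     and e: "\<And>j. j < Suc n \<Longrightarrow> W k a ! (p + j) = x (m + int j)"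
    using X_occ[OF assms, of "Suc n" m] by blast
  have r: "r < 2" unfolding r_def by simp
  have "\<forall>j<n. W (Suc k) a ! (2 * p + r + j) = sig x (i + int j)"
  proof (intro allI impI)
    fix j assume j: "j < n"
    have d: "(2 * p + r + j) div 2 = p + (r + j) div 2" "even (2 * p + r + j) = even (r + j)" by auto
    have e1: "W (Suc k) a ! (2 * p + r + j) =
       (if even (2 * p + r + j) then 0 else if W k a ! ((2 * p + r + j) div 2) = 0 then 1 else 0)"
      unfolding W_Suc using a r j by (subst nth_sw) auto
    have "W (Suc k) a ! (2 * p + r + j) =
       (if even (r + j) then 0 else if W k a ! (p + (r + j) div 2) = 0 then 1 else 0)"
      unfolding e1 d by (rule refl)
    also have "W k a ! (p + (r + j) div 2) = x (m + int ((r + j) div 2))"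
      using e[of "(r+j) div 2"] r j by simp
    finally have A: "W (Suc k) a ! (2 * p + r + j) =
       (if even (r + j) then 0 else if x (m + int ((r + j) div 2)) = 0 then 1 else 0)" .
    have i2: "i + int j = 2 * m + int (r + j)" using im by simp
    have d2: "(2 * m + int (r + j)) div 2 = m + int ((r + j) div 2)" by simp
    have ev: "even (2 * m + int (r + j)) = even (r + j)" by simp
    have B: "sig x (i + int j) = (if even (r + j) then 0 else if x (m + int ((r + j) div 2)) = 0 then 1 else 0)"
      unfolding sig_def i2 d2 ev by (rule refl)
    show "W (Suc k) a ! (2 * p + r + j) = sig x (i + int j)" unfolding A B by (rule refl)
  qed
  moreover have "2 * p + r + n \<le> 2 ^ Suc k" using a r by simp
  moreover have "Suc k \<ge> 1" by simp
  ultimately show "\<exists>a\<in>{0, 1}. \<exists>k\<ge>1. \<exists>p. p + n \<le> 2 ^ k \<and> (\<forall>j<n. W k a ! (p + j) = sig x (i + int j))"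
    using a(1) by blast
qed

lemma desub_X: assumes "x \<in> X_sigma" "\<And>i. x (2 * i) = 0" shows "desub x \<in> X_sigma"
  unfolding X_sigma_iff
proof (intro conjI allI)
  fix i show "desub x i \<in> {0,1}" by (simp add: desub_def)
next
  fix m n
  obtain a k p where a: "a \<in> {0,1}" "k \<ge> 1" "p + (2 * n + 4) \<le> 2 ^ k"
     and e: "\<And>j. j < 2 * n + 4 \<Longrightarrow> W k a ! (p + j) = x (2 * m + int j)"
    using X_occ[OF assms(1), of "2*n+4" "2*m"] by blast
  obtain l where kl: "k = Suc l" using a by (cases k) auto
  have len: "p + 2 * n + 4 \<le> 2 * 2 ^ l" using a kl by simp
  have "even p"
  proof (rule ccontr)
    assume op: "odd p"
    have "W k a ! p = 0" using e[of 0] assms(2)[of m] by simp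
    moreover have "W k a ! (p + 2) = 0" using e[of 2] assms(2)[of "m+1"] by (simp add: algebra_simps)
    ultimately have "W l a ! (p div 2) \<noteq> 0" "W l a ! ((p+2) div 2) \<noteq> 0"
      using op len unfolding kl W_Suc
      by (subst (asm) nth_sw, simp, simp split: if_splits)+
    moreover have "(p+2) div 2 = Suc (p div 2)" by simp
    moreover have "Suc (p div 2) < 2 ^ l" using len op by simp
    ultimately show False using W_no11[of "p div 2" l a] by simp
  qed
  then obtain q where pq: "p = 2 * q" by blast
  have l1: "l \<ge> 1" using len by (cases l) auto
  have "\<forall>j<n. W l a ! (q + j) = desub x (m + int j)"
  proof (intro allI impI)
    fix j assume j: "j < n"
    have i1: "2 * m + int (2 * j + 1) = 2 * (m + int j) + 1" by simp
    have h1: "W k a ! (p + (2 * j + 1)) = x (2 * (m + int j) + 1)" using e[of "2*j+1"] j unfolding i1 by simp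
    have h2: "W k a ! (p + (2 * j + 1)) = (if W l a ! (q + j) = 0 then 1 else 0)"
      unfolding kl W_Suc using len j pq by (subst nth_sw) auto
    have "W l a ! (q + j) \<in> {0,1}" using W_letters[OF a(1), of "q+j" l] len pq j by simp
    then show "W l a ! (q + j) = desub x (m + int j)" unfolding desub_def h1[symmetric] h2 by auto
  qed
  moreover have "q + n \<le> 2 ^ l" using len pq by simp
  ultimately show "\<exists>a\<in>{0, 1}. \<exists>k\<ge>1. \<exists>p. p + n \<le> 2 ^ k \<and> (\<forall>j<n. W k a ! (p + j) = desub x (m + int j))"
    using a l1 by blast
qed

lemma desub_sig: assumes "x \<in> X_sigma" shows "desub (sig x) = x"
proof
  fix j
  have "x j \<in> {0,1}" using X_vals[OF assms] .
  moreover have "(2*j+1) div 2 = j" by simp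
  ultimately show "desub (sig x) j = x j" by (auto simp: desub_def sig_def)
qed

lemma sig_desub: assumes "x \<in> X_sigma" "\<And>i. x (2 * i) = 0" shows "sig (desub x) = x"
proof
  fix i
  show "sig (desub x) i = x i"
  proof (cases "even i")
    case True then obtain j where "i = 2 * j" by blast
    then show ?thesis using assms(2) by (simp add: sig_def)
  next
    case False then have e: "2 * (i div 2) + 1 = i" by simp
    have "sig (desub x) i = (if x i = 0 then 0 else 1)" using False by (simp add: sig_def desub_def e)
    then show ?thesis using X_vals[OF assms(1), of i] by auto
  qed
qed

lemma shift2_sig: "shift (shift (sig x)) = sig (shift x)"
proof
  fix i :: int
  have "(i + 1 + 1) div 2 = i div 2 + 1" by simp
  then show "shift (shift (sig x)) i = sig (shift x) i" by (simp add: shift_def sig_def)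
qed




fun v2 :: "nat \<Rightarrow> nat" where "v2 n = (if n = 0 \<or> odd n then 0 else Suc (v2 (n div 2)))"
declare v2.simps[simp del]

lemma v2_odd: "odd n \<Longrightarrow> v2 n = 0" by (simp add: v2.simps)
lemma v2_double: "n \<noteq> 0 \<Longrightarrow> v2 (2 * n) = Suc (v2 n)" by (subst v2.simps) simp

lemma v2_quad: "n \<noteq> 0 \<Longrightarrow> v2 (4 * n) = Suc (Suc (v2 n))"
  using v2_double[of "2*n"] v2_double[of n] by (simp add: mult.assoc[symmetric])

definition p0 :: "int \<Rightarrow> nat" where "p0 i = (if i = -1 then 1 else v2 (nat \<bar>i+1\<bar>) mod 2)"

lemma p0_vals: "p0 i \<in> {0,1}" by (auto simp: p0_def)

lemma odd_nat_abs: "odd (m::int) \<Longrightarrow> odd (nat \<bar>m\<bar>)"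
  by (simp add: even_nat_iff)

lemma p0_block: assumes "r < 4" shows "p0 (4 * i + int r) = [0,1,0,p0 i] ! r"
proof -
  have "r = 0 \<or> r = 1 \<or> r = 2 \<or> r = 3" using assms by auto
  moreover
  { assume r: "r = 0"
    have "4 * i \<noteq> -1" by presburger
    moreover have "odd (nat \<bar>4 * i + 1\<bar>)" by (rule odd_nat_abs) presburger
    ultimately have ?thesis using r by (simp add: p0_def v2_odd) }
  moreover
  { assume r: "r = 2"
    have "4 * i + 2 \<noteq> -1" by presburger
    moreover have "odd (nat \<bar>4 * i + 3\<bar>)" by (rule odd_nat_abs) presburger
    ultimately have ?thesis using r by (simp add: p0_def v2_odd add.assoc) }
  moreover
  { assume r: "r = 1"
    have "4 * i + 1 \<noteq> -1" by presburger
    moreover have "nat \<bar>4 * i + 2\<bar> = 2 * nat \<bar>2 * i + 1\<bar>"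
    proof -
      have "4 * i + 2 = 2 * (2 * i + 1)" by simp
      then show ?thesis by (simp only: abs_mult nat_mult_distrib) simp
    qed
    moreover have "odd (nat \<bar>2 * i + 1\<bar>)" by (rule odd_nat_abs) presburger
    moreover have "nat \<bar>2 * i + 1\<bar> \<noteq> 0"
    proof -
      have "2 * i + 1 \<noteq> 0" by presburger
      then show ?thesis by simp
    qed
    ultimately have ?thesis using r by (simp add: p0_def v2_odd v2_double add.assoc) }
  moreover
  { assume r: "r = 3"
    have ?thesis
    proof (cases "i = -1")
      case True then show ?thesis using r by (simp add: p0_def)
    next
      case False
      have "4 * i + 3 \<noteq> -1" using False by presburger
      moreover have "nat \<bar>4 * i + 4\<bar> = 2 * (2 * nat \<bar>i + 1\<bar>)"
      proof -
        have "4 * i + 4 = 4 * (i + 1)" by simp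
        then show ?thesis by (simp only: abs_mult nat_mult_distrib) simp
      qed
      moreover have "nat \<bar>i + 1\<bar> \<noteq> 0"
      proof -
        have "i + 1 \<noteq> 0" using False by simp
        then show ?thesis by simp
      qed
      ultimately show ?thesis using r False by (simp add: p0_def v2_quad add.assoc)
    qed }
  ultimately show ?thesis by blast
qed

lemma sw2_nth: assumes "t < length V" "r < 4" "\<forall>a\<in>set V. a \<in> {0,1}"
  shows "sigma_word (sigma_word V) ! (4 * t + r) = [0,1,0,V!t] ! r"
proof -
  have "r = 0 \<or> r = 1 \<or> r = 2 \<or> r = 3" using assms by auto
  moreover have "V ! t \<in> {0,1}" using assms by auto
  moreover have "(4 * t + 1) div 2 = 2 * t" "(4 * t + 3) div 2 = 2 * t + 1" by auto
  moreover have "odd (4 * t + 1)" "odd (4 * t + 3)" by auto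
  ultimately show ?thesis using assms(1)
    by (auto simp: nth_sw)
qed

lemma p0_big: "\<forall>j < 2 * 4 ^ k. p0 (- (4 ^ k) + int j) = (W (2 * k) 1 @ W (2 * k) 0) ! j"
proof (induction k)
  case 0
  show ?case
  proof (intro allI impI)
    fix j :: nat assume "j < 2 * 4 ^ 0"
    then have "j = 0 \<or> j = 1" by auto
    then show "p0 (- (4 ^ 0) + int j) = (W (2 * 0) 1 @ W (2 * 0) 0) ! j" by (auto simp: p0_def v2_odd)
  qed
next
  case (Suc k)
  define V where "V = W (2 * k) 1 @ W (2 * k) 0"
  have lenV: "length V = 2 * 4 ^ k" unfolding V_def by (simp add: power_mult)
  have letV: "\<forall>a\<in>set V. a \<in> {0,1}"
  proof
    fix a assume "a \<in> set V"
    then obtain t where "t < length V" "a = V ! t" by (auto simp: in_set_conv_nth)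
    then show "a \<in> {0,1}" unfolding V_def
      using W_letters[of 1 "t" "2*k"] W_letters[of 0 "t - 2^(2*k)" "2*k"]
      by (auto simp: nth_append)
  qed
  have eq: "W (2 * Suc k) 1 @ W (2 * Suc k) 0 = sigma_word (sigma_word V)"
    unfolding V_def by (simp del: funpow.simps add: numeral_2_eq_2 funpow.simps(2))
  show ?case
  proof (intro allI impI)
    fix j :: nat assume j: "j < 2 * 4 ^ Suc k"
    define t where "t = j div 4"
    define r where "r = j mod 4"
    have jt: "j = 4 * t + r" "r < 4" unfolding t_def r_def by auto
    have t: "t < 2 * 4 ^ k" using j jt by simp
    have e: "- (4 ^ Suc k) + int j = 4 * (- (4 ^ k) + int t) + int r" using jt by simp
    have "p0 (- (4 ^ Suc k) + int j) = [0,1,0,p0 (- (4 ^ k) + int t)] ! r"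
      unfolding e by (rule p0_block[OF jt(2)])
    also have "p0 (- (4 ^ k) + int t) = V ! t" using Suc t unfolding V_def by simp
    also have "[0,1,0,V ! t] ! r = sigma_word (sigma_word V) ! j"
      using sw2_nth[of t V r] lenV t jt letV by simp
    finally show "p0 (- (4 ^ Suc k) + int j) = (W (2 * Suc k) 1 @ W (2 * Suc k) 0) ! j"
      using eq by simp
  qed
qed

lemma p0_X: "p0 \<in> X_sigma"
  unfolding X_sigma_iff
proof (intro conjI allI)
  fix i show "p0 i \<in> {0,1}" by (rule p0_vals)
next
  fix i :: int and n :: nat
  define k where "k = nat \<bar>i\<bar> + n + 1"
  have "k < 4 ^ k" by (induction k) auto
  then have "int k \<le> 4 ^ k" by (metis of_nat_le_iff less_imp_le of_nat_numeral of_nat_power)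
  then have big: "int (nat \<bar>i\<bar> + n + 1) \<le> 4 ^ k" unfolding k_def by simp
  define s where "s = nat (i + 4 ^ k)"
  have s1: "int s = i + 4 ^ k" using big unfolding s_def by simp
  have "int (s + n) \<le> int (2 * 4 ^ k)" using big s1 abs_ge_self[of i] by simp
  then have s2: "s + n \<le> 2 * 4 ^ k" by (simp only: of_nat_le_iff)
  note s = s1 s2
  have W2: "W (2 * k + 2) 0 = (W (2*k) 0 @ W (2*k) 1) @ (W (2*k) 0 @ W (2*k) 0)"
    by (simp only: numeral_2_eq_2 add_Suc_right add_0_right W_Suc_right) simp
  have l0: "length (W (2*k) 0) = 4 ^ k" by (simp add: power_mult)
  have "\<forall>j<n. W (2 * k + 2) 0 ! (4 ^ k + s + j) = p0 (i + int j)"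
  proof (intro allI impI)
    fix j assume j: "j < n"
    have "W (2 * k + 2) 0 ! (4 ^ k + s + j) = (W (2*k) 1 @ W (2*k) 0) ! (s + j)"
      unfolding W2 using l0 s j by (simp add: nth_append)
    also have "\<dots> = p0 (- (4 ^ k) + int (s + j))"
    proof -
      have lt: "s + j < 2 * 4 ^ k" using s j by simp
      have "p0 (- (4 ^ k) + int (s + j)) = (W (2 * k) 1 @ W (2 * k) 0) ! (s + j)"
        using p0_big[of k] lt by blast
      then show ?thesis by simp
    qed
    also have "- (4 ^ k) + int (s + j) = i + int j" using s by simp
    finally show "W (2 * k + 2) 0 ! (4 ^ k + s + j) = p0 (i + int j)" .
  qed
  moreover have "4 ^ k + s + n \<le> 2 ^ (2 * k + 2)" using s by (simp add: power_add power_mult)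
  ultimately show "\<exists>a\<in>{0, 1}. \<exists>k\<ge>1. \<exists>p. p + n \<le> 2 ^ k \<and> (\<forall>j<n. W k a ! (p + j) = p0 (i + int j))"
    by (metis add.commute add.assoc insertI1 le_add1 one_add_one add_increasing2)
qed




definition mul2 :: "(nat \<Rightarrow> nat) \<Rightarrow> (nat \<Rightarrow> nat)" where
  "mul2 a = (\<lambda>n. 2 * a n mod 3 ^ n)"
definition mulh :: "(nat \<Rightarrow> nat) \<Rightarrow> (nat \<Rightarrow> nat)" where
  "mulh a = (\<lambda>n. ((3 ^ n + 1) div 2) * a n mod 3 ^ n)"

lemma c_prop: "2 * ((3 ^ n + 1) div 2) = (3 ^ n + 1 :: nat)"
proof -
  have "odd ((3::nat) ^ n)" by simp
  then have "even ((3::nat) ^ n + 1)" by simp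
  then show ?thesis by simp
qed

lemma c_step: "(3 ^ Suc n + 1) div 2 = (3 ^ n + 1) div 2 + (3 ^ n :: nat)"
  using c_prop[of n] c_prop[of "Suc n"] by simp

lemma Z3_D: "a \<in> Z3 \<Longrightarrow> a n < 3 ^ n \<and> a n = a (Suc n) mod 3 ^ n"
  unfolding Z3_def by blast

lemma dvd3: "(3::nat) ^ n dvd 3 ^ Suc n" by simp

lemma mm[simp]: "(b::nat) mod (3 * 3 ^ n) mod 3 ^ n = b mod 3 ^ n"
  by (rule mod_mod_cancel) simp

lemma mul2_Z3: assumes "a \<in> Z3" shows "mul2 a \<in> Z3"
  unfolding Z3_def
proof (intro CollectI allI conjI)
  fix n
  show "mul2 a n < 3 ^ n" by (simp add: mul2_def)
  have "mul2 a (Suc n) mod 3 ^ n = 2 * a (Suc n) mod 3 ^ n"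
    unfolding mul2_def by (simp add: mod_mod_cancel[OF dvd3])
  also have "\<dots> = 2 * (a (Suc n) mod 3 ^ n) mod 3 ^ n" by (simp add: mod_mult_right_eq)
  also have "\<dots> = mul2 a n" using Z3_D[OF assms, of n] by (simp add: mul2_def)
  finally show "mul2 a n = mul2 a (Suc n) mod 3 ^ n" by simp
qed

lemma mulh_Z3: assumes "a \<in> Z3" shows "mulh a \<in> Z3"
  unfolding Z3_def
proof (intro CollectI allI conjI)
  fix n
  show "mulh a n < 3 ^ n" by (simp add: mulh_def)
  have "mulh a (Suc n) mod 3 ^ n = (3 ^ Suc n + 1) div 2 * a (Suc n) mod 3 ^ n"
    unfolding mulh_def by (simp add: mod_mod_cancel[OF dvd3])
  also have "\<dots> = ((3 ^ n + 1) div 2 * a (Suc n) + 3 ^ n * a (Suc n)) mod 3 ^ n"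
    unfolding c_step by (simp add: algebra_simps)
  also have "\<dots> = (3 ^ n + 1) div 2 * a (Suc n) mod 3 ^ n" by simp
  also have "\<dots> = (3 ^ n + 1) div 2 * (a (Suc n) mod 3 ^ n) mod 3 ^ n" by (rule mod_mult_right_eq[symmetric])
  also have "\<dots> = mulh a n" using Z3_D[OF assms, of n] by (simp add: mulh_def)
  finally show "mulh a n = mulh a (Suc n) mod 3 ^ n" by simp
qed

lemma mulh_mul2: assumes "a \<in> Z3" shows "mulh (mul2 a) = a"
proof
  fix n
  have "mulh (mul2 a) n = (3 ^ n + 1) div 2 * (2 * a n) mod 3 ^ n"
    unfolding mulh_def mul2_def by (rule mod_mult_right_eq)
  also have "(3 ^ n + 1) div 2 * (2 * a n) = (3 ^ n + 1) * a n"
    using c_prop[of n] by (metis mult.assoc mult.commute)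
  also have "(3 ^ n + 1) * a n mod 3 ^ n = a n mod 3 ^ n" by (simp add: algebra_simps)
  also have "\<dots> = a n" using Z3_D[OF assms, of n] by simp
  finally show "mulh (mul2 a) n = a n" .
qed

lemma mul2_mulh: assumes "a \<in> Z3" shows "mul2 (mulh a) = a"
proof
  fix n
  have "mul2 (mulh a) n = 2 * ((3 ^ n + 1) div 2 * a n) mod 3 ^ n"
    unfolding mulh_def mul2_def by (rule mod_mult_right_eq)
  also have "2 * ((3 ^ n + 1) div 2 * a n) = (3 ^ n + 1) * a n"
    using c_prop[of n] by (metis mult.assoc)
  also have "(3 ^ n + 1) * a n mod 3 ^ n = a n mod 3 ^ n" by (simp add: algebra_simps)
  also have "\<dots> = a n" using Z3_D[OF assms, of n] by simp
  finally show "mul2 (mulh a) n = a n" .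
qed

lemma mul2_plus: "Z3_plus1 (Z3_plus1 (mul2 a)) = mul2 (Z3_plus1 a)"
proof
  fix n
  have "((2 * a n mod 3 ^ n + 1) mod 3 ^ n + 1) mod 3 ^ n = (2 * a n + 2) mod (3::nat) ^ n"
    by (simp add: mod_simps)
  moreover have "2 * ((a n + 1) mod 3 ^ n) mod 3 ^ n = (2 * a n + 2) mod (3::nat) ^ n"
    by (simp add: mod_simps algebra_simps)
  ultimately show "Z3_plus1 (Z3_plus1 (mul2 a)) n = mul2 (Z3_plus1 a) n"
    by (simp add: Z3_plus1_def mul2_def)
qed

lemma plus_Z3: assumes "a \<in> Z3" shows "Z3_plus1 a \<in> Z3"
  unfolding Z3_def
proof (intro CollectI allI conjI)
  fix n
  show "Z3_plus1 a n < 3 ^ n" by (simp add: Z3_plus1_def)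
  have "Z3_plus1 a (Suc n) mod 3 ^ n = (a (Suc n) + 1) mod 3 ^ n"
    unfolding Z3_plus1_def by (simp add: mod_mod_cancel[OF dvd3])
  also have "\<dots> = (a (Suc n) mod 3 ^ n + 1) mod 3 ^ n" by (simp add: mod_simps)
  also have "\<dots> = Z3_plus1 a n" using Z3_D[OF assms, of n] by (simp add: Z3_plus1_def)
  finally show "Z3_plus1 a n = Z3_plus1 a (Suc n) mod 3 ^ n" by simp
qed

lemma zero_Z3: "(\<lambda>n. 0) \<in> Z3" unfolding Z3_def by simp




lemma top_Xs: "topspace X_sigma_top = X_sigma"
proof -
  have "X_sigma \<subseteq> (PiE UNIV (\<lambda>_. {0::nat,1}))"
  proof
    fix x assume "x \<in> X_sigma"
    then show "x \<in> (PiE UNIV (\<lambda>_. {0::nat,1}))" unfolding PiE_UNIV_domain Pi_iff using X_vals by blast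
  qed
  then show ?thesis unfolding X_sigma_top_def topspace_subtopology topspace_product_topology topspace_discrete_topology
    by blast
qed

lemma top_Z3: "topspace Z3_top = Z3"
  unfolding Z3_top_def Z3_def by (auto simp: PiE_UNIV_domain)

abbreviation PT where "PT \<equiv> prod_topology X_sigma_top Z3_top"

lemma top_PT: "topspace PT = X_sigma \<times> Z3" by (simp add: top_Xs top_Z3)

lemma cont_comp_disc:
  assumes "continuous_map Y (discrete_topology A) g" "\<And>a. a \<in> A \<Longrightarrow> F a \<in> B"
  shows "continuous_map Y (discrete_topology B) (\<lambda>y. F (g y))"
proof -
  have "continuous_map (discrete_topology A) (discrete_topology B) F" using assms(2) by auto
  from continuous_map_compose[OF assms(1) this] show ?thesis by (simp add: o_def)
qed

lemma cont_Xs_proj: "continuous_map X_sigma_top (discrete_topology {0,1}) (\<lambda>x. x k)"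
  unfolding X_sigma_top_def
  by (rule continuous_map_from_subtopology) (rule continuous_map_product_projection[of k UNIV "\<lambda>_. discrete_topology {0,1}", simplified])

lemma cont_Z3_proj: "continuous_map Z3_top (discrete_topology {..<3^n}) (\<lambda>x. x n)"
  unfolding Z3_top_def
  by (rule continuous_map_from_subtopology) (rule continuous_map_product_projection[of n UNIV "\<lambda>n. discrete_topology {..<3^n}", simplified])

lemma cont_PT_x: "continuous_map (subtopology PT S) (discrete_topology {0,1}) (\<lambda>p. fst p k)"
proof -
  have "continuous_map PT (discrete_topology {0,1}) ((\<lambda>x. x k) \<circ> fst)"
    by (rule continuous_map_compose[OF continuous_map_fst cont_Xs_proj])
  then show ?thesis by (intro continuous_map_from_subtopology) (simp add: o_def)
qed

lemma cont_PT_z: "continuous_map (subtopology PT S) (discrete_topology {..<3^n}) (\<lambda>p. snd p n)"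
proof -
  have "continuous_map PT (discrete_topology {..<3^n}) ((\<lambda>x. x n) \<circ> snd)"
    by (rule continuous_map_compose[OF continuous_map_snd cont_Z3_proj])
  then show ?thesis by (intro continuous_map_from_subtopology) (simp add: o_def)
qed

lemma cont_into_Xs:
  assumes "\<And>k. continuous_map Y (discrete_topology {0,1}) (\<lambda>y. f y k)" "\<And>y. y \<in> topspace Y \<Longrightarrow> f y \<in> X_sigma"
  shows "continuous_map Y X_sigma_top f"
  unfolding X_sigma_top_def continuous_map_in_subtopology continuous_map_componentwise_UNIV
  using assms by auto

lemma cont_into_Z3:
  assumes "\<And>n. continuous_map Y (discrete_topology {..<3^n}) (\<lambda>y. f y n)" "\<And>y. y \<in> topspace Y \<Longrightarrow> f y \<in> Z3"
  shows "continuous_map Y Z3_top f"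
  unfolding Z3_top_def continuous_map_in_subtopology continuous_map_componentwise_UNIV
  using assms by auto

definition hh :: "(int \<Rightarrow> nat) \<times> (nat \<Rightarrow> nat) \<Rightarrow> (int \<Rightarrow> nat) \<times> (nat \<Rightarrow> nat)" where
  "hh p = (sig (fst p), mul2 (snd p))"
definition gg :: "(int \<Rightarrow> nat) \<times> (nat \<Rightarrow> nat) \<Rightarrow> (int \<Rightarrow> nat) \<times> (nat \<Rightarrow> nat)" where
  "gg p = (desub (fst p), mulh (snd p))"

definition UU :: "((int \<Rightarrow> nat) \<times> (nat \<Rightarrow> nat)) set" where
  "UU = {p \<in> X_sigma \<times> Z3. fst p 0 = 0 \<and> fst p 2 = 0}"

lemma UU_D: assumes "q \<in> UU" shows "fst q \<in> X_sigma" "\<And>i. fst q (2 * i) = 0" "snd q \<in> Z3"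
  using assms evens_zero[of "fst q"] unfolding UU_def by auto

lemma hh_in: assumes "p \<in> X_sigma \<times> Z3" shows "hh p \<in> UU"
  using assms sig_X[of "fst p"] mul2_Z3[of "snd p"] unfolding UU_def hh_def by (auto simp: sig_def)

lemma T_top: assumes "p \<in> X_sigma \<times> Z3" shows "T_map p \<in> X_sigma \<times> Z3"
  using assms shift_X plus_Z3 unfolding T_map_def by auto

lemma hh_T_not: assumes "p \<in> X_sigma \<times> Z3" shows "T_map (hh p) \<notin> UU"
proof
  assume "T_map (hh p) \<in> UU"
  then have "sig (fst p) 1 = 0" "sig (fst p) 3 = 0"
    unfolding UU_def T_map_def hh_def shift_def by auto
  then have "fst p 0 \<noteq> 0" "fst p 1 \<noteq> 0" by (auto simp: sig_def split: if_splits)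
  moreover have "fst p 0 = 0 \<or> fst p (0 + 1) = 0" using B3[of "fst p" 0] assms by auto
  ultimately show False by simp
qed

lemma hh_T2: "T_map (T_map (hh p)) = hh (T_map p)"
  unfolding T_map_def hh_def by (simp add: shift2_sig mul2_plus)

lemma ret2: assumes "p \<in> X_sigma \<times> Z3" shows "return_time T_map UU (hh p) = 2"
  unfolding return_time_def
proof (rule Least_equality)
  show "0 < (2::nat) \<and> (T_map ^^ 2) (hh p) \<in> UU"
    using hh_T2[of p] hh_in[OF T_top[OF assms]] by (simp add: numeral_2_eq_2)
next
  fix y :: nat assume a: "0 < y \<and> (T_map ^^ y) (hh p) \<in> UU"
  show "2 \<le> y"
  proof (rule ccontr)
    assume "\<not> 2 \<le> y"
    then have "y = 1" using a by auto
    then show False using a hh_T_not[OF assms] by simp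
  qed
qed

lemma induced_hh: assumes "p \<in> X_sigma \<times> Z3" shows "induced_map T_map UU (hh p) = hh (T_map p)"
  unfolding induced_map_def ret2[OF assms] using hh_T2[of p] by (simp add: numeral_2_eq_2)

lemma UU_sub: "UU \<subseteq> topspace PT" unfolding UU_def top_PT by auto

lemma UU_eq: "UU = {p \<in> topspace PT. fst p 0 \<in> {0}} \<inter> {p \<in> topspace PT. fst p 2 \<in> {0}}"
  unfolding UU_def top_PT by auto

lemma UU_open: "openin PT UU"
  unfolding UU_eq
  by (intro openin_Int openin_continuous_map_preimage[OF cont_PT_x[of UNIV, simplified]]) auto

lemma UU_closed: "closedin PT UU"
  unfolding UU_eq
  by (intro closedin_Int closedin_continuous_map_preimage[OF cont_PT_x[of UNIV, simplified]]) auto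

lemma cont_sig: "continuous_map (subtopology PT S) X_sigma_top (\<lambda>p. sig (fst p))"
proof (rule cont_into_Xs)
  fix k :: int
  have "continuous_map (subtopology PT S) (discrete_topology {0,1})
     (\<lambda>y. (\<lambda>a. if even k then 0 else if a = 0 then 1 else (0::nat)) (fst y (k div 2)))"
    by (rule cont_comp_disc[OF cont_PT_x]) auto
  then show "continuous_map (subtopology PT S) (discrete_topology {0,1}) (\<lambda>y. sig (fst y) k)"
    by (simp add: sig_def)
next
  fix y assume "y \<in> topspace (subtopology PT S)"
  then show "sig (fst y) \<in> X_sigma" using sig_X top_PT by auto
qed

lemma cont_desub: "continuous_map (subtopology PT UU) X_sigma_top (\<lambda>p. desub (fst p))"
proof (rule cont_into_Xs)
  fix k :: int
  have "continuous_map (subtopology PT UU) (discrete_topology {0,1})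
     (\<lambda>y. (\<lambda>a. if a = 0 then 1 else (0::nat)) (fst y (2 * k + 1)))"
    by (rule cont_comp_disc[OF cont_PT_x]) auto
  then show "continuous_map (subtopology PT UU) (discrete_topology {0,1}) (\<lambda>y. desub (fst y) k)"
    by (simp add: desub_def)
next
  fix y assume "y \<in> topspace (subtopology PT UU)"
  then have "y \<in> UU" by auto
  then show "desub (fst y) \<in> X_sigma" using desub_X UU_D by blast
qed

lemma cont_mul2: "continuous_map (subtopology PT S) Z3_top (\<lambda>p. mul2 (snd p))"
proof (rule cont_into_Z3)
  fix n :: nat
  have "continuous_map (subtopology PT S) (discrete_topology {..<3^n})
     (\<lambda>y. (\<lambda>a. 2 * a mod 3 ^ n) (snd y n))"
    by (rule cont_comp_disc[OF cont_PT_z]) auto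
  then show "continuous_map (subtopology PT S) (discrete_topology {..<3^n}) (\<lambda>y. mul2 (snd y) n)"
    by (simp add: mul2_def)
next
  fix y assume "y \<in> topspace (subtopology PT S)"
  then show "mul2 (snd y) \<in> Z3" using mul2_Z3 top_PT by auto
qed

lemma cont_mulh: "continuous_map (subtopology PT S) Z3_top (\<lambda>p. mulh (snd p))"
proof (rule cont_into_Z3)
  fix n :: nat
  have "continuous_map (subtopology PT S) (discrete_topology {..<3^n})
     (\<lambda>y. (\<lambda>a. (3 ^ n + 1) div 2 * a mod 3 ^ n) (snd y n))"
    by (rule cont_comp_disc[OF cont_PT_z]) auto
  then show "continuous_map (subtopology PT S) (discrete_topology {..<3^n}) (\<lambda>y. mulh (snd y) n)"
    by (simp add: mulh_def)
next
  fix y assume "y \<in> topspace (subtopology PT S)"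
  then show "mulh (snd y) \<in> Z3" using mulh_Z3 top_PT by auto
qed

lemma hh_homeo: "homeomorphic_maps PT (subtopology PT UU) hh gg"
  unfolding homeomorphic_maps_def
proof (intro conjI ballI)
  have "continuous_map (subtopology PT UNIV) PT hh"
    unfolding hh_def by (rule continuous_map_pairedI[OF cont_sig cont_mul2])
  then show "continuous_map PT (subtopology PT UU) hh"
    unfolding continuous_map_in_subtopology using hh_in top_PT by auto
  show "continuous_map (subtopology PT UU) PT gg"
    unfolding gg_def by (rule continuous_map_pairedI[OF cont_desub cont_mulh])
next
  fix x assume "x \<in> topspace PT"
  then show "gg (hh x) = x" unfolding gg_def hh_def top_PT
    using desub_sig mulh_mul2 by (auto simp: prod_eq_iff)
next
  fix y assume "y \<in> topspace (subtopology PT UU)"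
  then have "y \<in> UU" by auto
  then show "hh (gg y) = y" unfolding gg_def hh_def
    using sig_desub mul2_mulh UU_D by (auto simp: prod_eq_iff)
qed

theorem mainTheorem13:
  shows "self_induced (prod_topology X_sigma_top Z3_top) T_map"
  unfolding self_induced_def
proof (intro exI[of _ UU] conjI)
  show "UU \<noteq> {}" using hh_in[of "(p0, \<lambda>n. 0)"] p0_X zero_Z3 by auto
  have "p0 1 = 1" using v2_double[of 1] v2_odd[of 1] by (simp add: p0_def)
  then have "(shift p0, \<lambda>n. 0) \<in> topspace PT - UU"
    using shift_X[OF p0_X] zero_Z3 top_PT unfolding UU_def by (auto simp: shift_def)
  then show "UU \<subset> topspace PT" using UU_sub by blast
  show "openin PT UU" by (rule UU_open)
  show "closedin PT UU" by (rule UU_closed)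
  show "top_conjugate PT T_map (subtopology PT UU) (induced_map T_map UU)"
    unfolding top_conjugate_def homeomorphic_map_maps
    using hh_homeo induced_hh top_PT by auto
qed


end
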